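(* Assume the setting and condition (B) with sequence $s_{j_0}=s_-,s_{j_1}=s_+,\dots,s_{j_n}$, let $S'=S\setminus\{s_{j_n}\}$, $w=s_{j_1}\cdots s_{j_n}$, and let $\tau:W_{S'}\to W_{S/e,N}$ be the isomorphism with $\tau(s)=s$ for $s\notin\{s_{j_0},\dots,s_{j_n}\}$, $\tau(s_{j_\ell})=s_{j_{\ell+1}}$ ($1\le\ell\le n-1$), $\tau(s_{j_0})=s_0$. Define the linear map $\sigma^1:V_{S'}\to V_S$ by $\sigma^1(\alpha_s)=\alpha_s$ for $s\notin\{s_{j_0},\dots,s_{j_n}\}$ and $\sigma^1(\alpha_{s_{j_\ell}})=\sigma_{s_{j_1}}\cdots\sigma_{s_{j_n}}(\alpha_{s_{j_\ell}})$ for $0\le\ell\le n-1$. Then $\sigma^1$ is a linear isomorphism onto $V_{S/e}$, and for all $\alpha\in V_{S'}$, $x\in W_{S'}$, \[ \phi^{\mathrm{aff}}\big(\sigma^1(\alpha),\tau(x)\big)=\big(\sigma_w(\alpha),\,wxw^{-1}\big)\in V_S\rtimes W_{S,M}. \]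
   Context: A Coxeter matrix on $S$ is a symmetric matrix $M=(m_{s,s'})$ with entries in $\mathbb Z_{\ge1}\sqcup\{\infty\}$, $m_{s,s'}=1$ iff $s=s'$; $W_{S,M}$ is generated by $S$ with relations $(ss')^{m_{s,s'}}=1$ for $m_{s,s'}\ne\infty$. Edge contraction: $e=\{s_+,s_-\}$, $m_{s_+,s_-}=3$, $S/e=(S\setminus\{s_+,s_-\})\sqcup\{s_0\}$, $N=(n_{s,s'})$ with $n_{s,s}=1$, $n_{s,s'}=m_{s,s'}$ for distinct $s,s'\ne s_0$, and for $s\ne s_0$: $n_{s,s_0}=m_{s,s_+}+m_{s,s_-}-2$ if $m_{s,s_+}=2$ or $m_{s,s_-}=2$, and $n_{s,s_0}=\infty$ otherwise. $\phi:W_{S/e,N}\to W_{S,M}$ is the (injective) homomorphism $s\mapsto s$ ($s\ne s_0$), $s_0\mapsto s_+s_-s_+$. Condition (B): there exist $n\ge1$ and pairwise distinct $s_{j_0}=s_-,s_{j_1}=s_+,s_{j_2},\dots,s_{j_n}\in S$ with $m_{s_{j_k},s_{j_{k+1}}}=3$ ($0\le k\le n-1$), and for every $1\le k\le n$ and every $s\in S$ different from $s_{j_k}$, $s_{j_{k-1}}$ and (if $k<n$) $s_{j_{k+1}}$, $m_{s_{j_k},s}=2$. Reflection representation: $V_S=\bigoplus_{s\in S}\mathbb R\alpha_s$, $k_{s,s'}=2\cos(\pi/m_{s,s'})$ (with $\pi/\infty=0$), and $\sigma_s(\alpha_{s'})=\alpha_{s'}+k_{s,s'}\alpha_s$; $s\mapsto\sigma_s$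 gives a faithful representation $\sigma$ of $W_{S,M}$; write $\sigma_x$ for the image of $x$. For $S'\subseteq S$, $V_{S'}=\bigoplus_{s\in S'}\mathbb R\alpha_s\subseteq V_S$ is stable under the subgroup $W_{S'}$ generated by $S'$. Let $\alpha_{s_0}:=\alpha_{s_+}+\alpha_{s_-}$ and $V_{S/e}=\bigoplus_{s\in S/e}\mathbb R\alpha_s\subseteq V_S$; $W_{S/e,N}$ acts on $V_{S/e}$ by $\tilde\sigma_s(\alpha_{s'})=\alpha_{s'}+\tilde k_{s,s'}\alpha_s$ with $\tilde k_{s,s'}=2\cos(\pi/n_{s,s'})$. Semidirect products $V\rtimes W$ have multiplication $(\alpha,x)(\beta,y)=(\alpha+x\cdot\beta,xy)$, and $\phi^{\mathrm{aff}}:V_{S/e}\rtimes W_{S/e,N}\to V_S\rtimes W_{S,M}$ is $(\alpha,x)\mapsto(\alpha,\phi(x))$. *)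

theory Defs
  imports Complex_Main "HOL-Library.Extended_Nat"
begin

definition is_coxeter_matrix :: "'a set \<Rightarrow> ('a \<Rightarrow> 'a \<Rightarrow> enat) \<Rightarrow> bool" where
  "is_coxeter_matrix S M \<longleftrightarrow>
     (\<forall>s\<in>S. \<forall>t\<in>S. M s t = M t s \<and> 1 \<le> M s t \<and> (M s t = 1 \<longleftrightarrow> s = t))"

text \<open>Elements of W_{S,M} are represented by words (lists) over S; two words represent the same
  group element iff they are related by the congruence generated by the relations (s s')^m = 1
  for m = M s s' finite.  Since all generators are involutions, this monoid presentation
  presents the group W_{S,M}.\<close>
inductive cox_eq :: "'a set \<Rightarrow> ('a \<Rightarrow> 'a \<Rightarrow> enat) \<Rightarrow> 'a list \<Rightarrow> 'a list \<Rightarrow> bool"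
  for S M where
  refl: "cox_eq S M u u"
| sym: "cox_eq S M u v \<Longrightarrow> cox_eq S M v u"
| trans: "cox_eq S M u v \<Longrightarrow> cox_eq S M v x \<Longrightarrow> cox_eq S M u x"
| rel: "s \<in> S \<Longrightarrow> t \<in> S \<Longrightarrow> M s t = enat m \<Longrightarrow>
        cox_eq S M (u @ concat (replicate m [s, t]) @ v) (u @ v)"

text \<open>Inverse of an element represented by a word (generators are involutions).\<close>
definition word_inv :: "'a list \<Rightarrow> 'a list" where
  "word_inv w = rev w"

definition contr_val :: "('a \<Rightarrow> 'a \<Rightarrow> enat) \<Rightarrow> 'a \<Rightarrow> 'a \<Rightarrow> 'a \<Rightarrow> enat" where
  "contr_val M sp sm s =
     (if M s sp = 2 \<or> M s sm = 2 then M s sp + M s sm - 2 else \<infinity>)"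

text \<open>The contracted set S/e (s0 a fresh element) and the matrix N.\<close>
definition contr_set :: "'a set \<Rightarrow> 'a \<Rightarrow> 'a \<Rightarrow> 'a \<Rightarrow> 'a set" where
  "contr_set S sp sm s0 = (S - {sp, sm}) \<union> {s0}"

definition contr_mat :: "('a \<Rightarrow> 'a \<Rightarrow> enat) \<Rightarrow> 'a \<Rightarrow> 'a \<Rightarrow> 'a \<Rightarrow> 'a \<Rightarrow> 'a \<Rightarrow> enat" where
  "contr_mat M sp sm s0 s t =
     (if s = t then 1
      else if t = s0 then contr_val M sp sm s
      else if s = s0 then contr_val M sp sm t
      else M s t)"

definition phi_word :: "'a \<Rightarrow> 'a \<Rightarrow> 'a \<Rightarrow> 'a list \<Rightarrow> 'a list" where
  "phi_word sp sm s0 w = concat (map (\<lambda>s. if s = s0 then [sp, sm, sp] else [s]) w)"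

text \<open>Vectors of V_S are finitely supported real functions supported in S; alpha s is the basis vector.\<close>
definition vecs :: "'a set \<Rightarrow> ('a \<Rightarrow> real) set" where
  "vecs S = {v. finite {t. v t \<noteq> 0} \<and> (\<forall>t. t \<notin> S \<longrightarrow> v t = 0)}"

definition alpha :: "'a \<Rightarrow> 'a \<Rightarrow> real" where
  "alpha s = (\<lambda>t. if t = s then 1 else 0)"

definition kcoef :: "('a \<Rightarrow> 'a \<Rightarrow> enat) \<Rightarrow> 'a \<Rightarrow> 'a \<Rightarrow> real" where
  "kcoef M s t = (case M s t of enat m \<Rightarrow> 2 * cos (pi / real m) | \<infinity> \<Rightarrow> 2)"

text \<open>sigma_s (alpha_t) = alpha_t + k_{s,t} alpha_s, extended linearly.\<close>
definition sigma_gen :: "('a \<Rightarrow> 'a \<Rightarrow> enat) \<Rightarrow> 'a \<Rightarrow> ('a \<Rightarrow> real) \<Rightarrow> ('a \<Rightarrow> real)" where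
  "sigma_gen M s v = (\<lambda>t. v t + (if t = s then (\<Sum>t'\<in>{t'. v t' \<noteq> 0}. v t' * kcoef M s t') else 0))"

fun sigma_word :: "('a \<Rightarrow> 'a \<Rightarrow> enat) \<Rightarrow> 'a list \<Rightarrow> ('a \<Rightarrow> real) \<Rightarrow> ('a \<Rightarrow> real)" where
  "sigma_word M [] = id"
| "sigma_word M (s # w) = sigma_gen M s \<circ> sigma_word M w"

text \<open>V_{S/e} = span of alpha_s (s in S - {s+,s-}) and alpha_{s0} = alpha_{s+} + alpha_{s-}, inside V_S.\<close>
definition contr_vecs :: "'a set \<Rightarrow> 'a \<Rightarrow> 'a \<Rightarrow> ('a \<Rightarrow> real) set" where
  "contr_vecs S sp sm =
     {v. \<exists>a\<in>vecs (S - {sp, sm}). \<exists>b::real. v = (\<lambda>t. a t + b * (alpha sp t + alpha sm t))}"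

definition lin_ext :: "('a \<Rightarrow> 'a \<Rightarrow> real) \<Rightarrow> ('a \<Rightarrow> real) \<Rightarrow> ('a \<Rightarrow> real)" where
  "lin_ext f v = (\<lambda>t. \<Sum>s\<in>{s. v s \<noteq> 0}. v s * f s t)"

definition phi_aff :: "'a \<Rightarrow> 'a \<Rightarrow> 'a \<Rightarrow> ('a \<Rightarrow> real) \<times> 'a list \<Rightarrow> ('a \<Rightarrow> real) \<times> 'a list" where
  "phi_aff sp sm s0 p = (fst p, phi_word sp sm s0 (snd p))"

definition sd_eq :: "'a set \<Rightarrow> ('a \<Rightarrow> 'a \<Rightarrow> enat) \<Rightarrow> ('a \<Rightarrow> real) \<times> 'a list \<Rightarrow> ('a \<Rightarrow> real) \<times> 'a list \<Rightarrow> bool" where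
  "sd_eq S M p q \<longleftrightarrow> fst p = fst q \<and> cox_eq S M (snd p) (snd q)"

end

theory Submission
  imports Defs
begin


lemma kcoef2: "M s t = 2 \<Longrightarrow> kcoef M s t = 0"
  by (simp add: kcoef_def numeral_eq_enat cos_pi_half)
lemma kcoef3: "M s t = 3 \<Longrightarrow> kcoef M s t = 1"
  by (simp add: kcoef_def numeral_eq_enat cos_60)
lemma kcoef1: "M s t = 1 \<Longrightarrow> kcoef M s t = -2"
  by (simp add: kcoef_def one_enat_def)

lemma sig_sum:
  assumes "finite {t. u t \<noteq> 0}" "finite F" "\<forall>t. t \<notin> F \<longrightarrow> u t * kcoef M s t = 0"
  shows "sigma_gen M s u = (\<lambda>t. u t + (if t = s then (\<Sum>t'\<in>F. u t' * kcoef M s t') else 0))"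
proof -
  have "(\<Sum>t'\<in>{t'. u t' \<noteq> 0}. u t' * kcoef M s t') = (\<Sum>t'\<in>{t'. u t' \<noteq> 0} \<union> F. u t' * kcoef M s t')"
    by (rule sum.mono_neutral_left) (use assms in auto)
  also have "\<dots> = (\<Sum>t'\<in>F. u t' * kcoef M s t')"
    by (rule sum.mono_neutral_right) (use assms in auto)
  finally have h: "(\<Sum>t'\<in>{t'. u t' \<noteq> 0}. u t' * kcoef M s t') = (\<Sum>t'\<in>F. u t' * kcoef M s t')" .
  show ?thesis unfolding sigma_gen_def by (rule ext) (simp only: h)
qed

lemma alpha_sum: "(\<Sum>s\<in>A. v s * alpha s x) = (if x \<in> A then v x else 0)"
  if "finite A"
proof -
  have "(\<Sum>s\<in>A. v s * alpha s x) = (\<Sum>s\<in>A. if s = x then v x else 0)" by (rule sum.cong) (auto simp: alpha_def)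
  then show ?thesis using that by (simp add: sum.delta')
qed

lemma cox_app: "cox_eq S M u v \<Longrightarrow> cox_eq S M (p @ u @ q) (p @ v @ q)"
proof (induction rule: cox_eq.induct)
  case (refl u) then show ?case by (rule cox_eq.refl)
next
  case (sym u v) then show ?case using cox_eq.sym by blast
next
  case (trans u v x) then show ?case by (metis cox_eq.trans)
next
  case (rel s t m u v)
  show ?case using cox_eq.rel[of s S t M m "p @ u" "v @ q"] rel by simp
qed

lemma cox_append: "cox_eq S M u u' \<Longrightarrow> cox_eq S M v v' \<Longrightarrow> cox_eq S M (u @ v) (u' @ v')"
  by (metis cox_app[of S M u u' "[]" v] cox_app[of S M v v' u' "[]"] append_Nil append_Nil2 cox_eq.trans)

lemma cox_cancel: assumes "s \<in> S" "M s s = 1"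
  shows "cox_eq S M (p @ [s, s] @ q) (p @ q)"
  using cox_eq.rel[of s S s M 1 p q] assms by (simp add: one_enat_def)

lemma cox_comm: assumes "s \<in> S" "t \<in> S" "M s t = 2" "M s s = 1" "M t t = 1"
  shows "cox_eq S M [s, t] [t, s]"
proof -
  have "cox_eq S M ([t, s] @ concat (replicate 2 [s, t]) @ []) ([t, s] @ [])"
    by (rule cox_eq.rel) (use assms in \<open>auto simp: numeral_eq_enat\<close>)
  then have a: "cox_eq S M [t,s,s,t,s,t] [t,s]" by (simp add: numeral_2_eq_2)
  have b: "cox_eq S M [t,s,s,t,s,t] [t,t,s,t]" using cox_cancel[of s S M "[t]" "[t,s,t]"] assms by simp
  have c: "cox_eq S M [t,t,s,t] [s,t]" using cox_cancel[of t S M "[]" "[s,t]"] assms by simp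
  show ?thesis by (meson a b c cox_eq.sym cox_eq.trans)
qed

lemma cox_braid: assumes "s \<in> S" "t \<in> S" "M s t = 3" "M t t = 1"
  shows "cox_eq S M [s,t,s,t,s] [t]"
proof -
  have "cox_eq S M ([] @ concat (replicate 3 [s, t]) @ [t]) ([] @ [t])"
    by (rule cox_eq.rel) (use assms in \<open>auto simp: numeral_eq_enat\<close>)
  then have a: "cox_eq S M [s,t,s,t,s,t,t] [t]" by (simp add: numeral_3_eq_3)
  have b: "cox_eq S M [s,t,s,t,s,t,t] [s,t,s,t,s]" using cox_cancel[of t S M "[s,t,s,t,s]" "[]"] assms by simp
  show ?thesis by (meson a b cox_eq.sym cox_eq.trans)
qed



lemma cox_comm_list:
  assumes "s \<in> S" "M s s = 1" "\<forall>t\<in>set L. t \<in> S \<and> M s t = 2 \<and> M t t = 1"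
  shows "cox_eq S M (s # L) (L @ [s])"
  using assms(3)
proof (induction L)
  case Nil then show ?case by (simp add: cox_eq.refl)
next
  case (Cons t L)
  have a: "cox_eq S M ([] @ [s, t] @ L) ([] @ [t, s] @ L)"
    by (rule cox_app) (rule cox_comm, use assms Cons.prems in auto)
  have b: "cox_eq S M ([t] @ (s # L) @ []) ([t] @ (L @ [s]) @ [])"
    by (rule cox_app) (use Cons in auto)
  show ?case using a b by (auto intro: cox_eq.trans)
qed

lemma cox_inv_list:
  assumes "\<forall>t\<in>set L. t \<in> S \<and> M t t = 1"
  shows "cox_eq S M (L @ rev L) []"
  using assms
proof (induction L)
  case Nil then show ?case by (simp add: cox_eq.refl)
next
  case (Cons t L)
  have a: "cox_eq S M ([t] @ (L @ rev L) @ [t]) ([t] @ [] @ [t])"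
    by (rule cox_app) (use Cons in auto)
  have b: "cox_eq S M ([] @ [t, t] @ []) ([] @ [])"
    by (rule cox_cancel) (use Cons in auto)
  show ?case using a b by (auto intro: cox_eq.trans)
qed

lemma cox_conj_list:
  assumes "s \<in> S" "M s s = 1" "\<forall>t\<in>set L. t \<in> S \<and> M s t = 2 \<and> M t t = 1"
  shows "cox_eq S M (L @ [s] @ rev L) [s]"
proof -
  have a: "cox_eq S M (L @ (s # rev L) @ []) (L @ (rev L @ [s]) @ [])"
    by (rule cox_app) (rule cox_comm_list, use assms in auto)
  have b: "cox_eq S M ([] @ (L @ rev L) @ [s]) ([] @ [] @ [s])"
    by (rule cox_app) (rule cox_inv_list, use assms in auto)
  show ?thesis using a b by (auto intro: cox_eq.trans)
qed

lemma phi_word_append: "phi_word sp sm s0 (u @ v) = phi_word sp sm s0 u @ phi_word sp sm s0 v"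
  by (simp add: phi_word_def)

locale chn =
  fixes S :: "'a set" and M :: "'a \<Rightarrow> 'a \<Rightarrow> enat" and c :: "nat \<Rightarrow> 'a" and n :: nat
  assumes cox: "is_coxeter_matrix S M"
    and n1: "1 \<le> n"
    and c_S: "\<forall>k\<le>n. c k \<in> S"
    and c_inj: "inj_on c {0..n}"
    and c3: "\<forall>k<n. M (c k) (c (Suc k)) = 3"
    and c2: "\<forall>k\<in>{1..n}. \<forall>s\<in>S. s \<noteq> c k \<and> s \<noteq> c (k - 1) \<and> (k < n \<longrightarrow> s \<noteq> c (Suc k))
               \<longrightarrow> M (c k) s = 2"
begin

lemma cS: "k \<le> n \<Longrightarrow> c k \<in> S" using c_S by auto
lemma ceq: "i \<le> n \<Longrightarrow> j \<le> n \<Longrightarrow> c i = c j \<longleftrightarrow> i = j"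
  using c_inj by (auto simp: inj_on_def)
lemma Msym: "s \<in> S \<Longrightarrow> t \<in> S \<Longrightarrow> M s t = M t s"
  using cox by (auto simp: is_coxeter_matrix_def)
lemma Mself: "s \<in> S \<Longrightarrow> M s s = 1"
  using cox by (auto simp: is_coxeter_matrix_def)
lemma M3: "k < n \<Longrightarrow> M (c k) (c (Suc k)) = 3" using c3 by auto
lemma M3': "k < n \<Longrightarrow> M (c (Suc k)) (c k) = 3" using M3 Msym cS by (metis Suc_leI less_imp_le)
lemma nb2: "1 \<le> k \<Longrightarrow> k \<le> n \<Longrightarrow> s \<in> S \<Longrightarrow> s \<noteq> c k \<Longrightarrow> s \<noteq> c (k - 1) \<Longrightarrow>
   (k < n \<Longrightarrow> s \<noteq> c (Suc k)) \<Longrightarrow> M (c k) s = 2"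
  using c2 by auto
lemma nb2': "1 \<le> k \<Longrightarrow> k \<le> n \<Longrightarrow> s \<in> S \<Longrightarrow> s \<noteq> c k \<Longrightarrow> s \<noteq> c (k - 1) \<Longrightarrow>
   (k < n \<Longrightarrow> s \<noteq> c (Suc k)) \<Longrightarrow> M s (c k) = 2"
  using nb2 Msym cS by metis

end

context chn begin

abbreviation "w \<equiv> map c [1..<Suc n]"

lemma setw: "set (map c [a..<b]) \<subseteq> S" if "b \<le> Suc n" using that cS by auto

lemma gen_out:
  assumes s: "s \<in> S" "s \<notin> c ` {0..n}" and s0: "s0 \<notin> S"
  shows "cox_eq S M (phi_word sp sm s0 [s]) (w @ [s] @ rev w)"
proof -
  have "cox_eq S M (w @ [s] @ rev w) [s]"
  proof (rule cox_conj_list)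
    show "\<forall>t\<in>set w. t \<in> S \<and> M s t = 2 \<and> M t t = 1"
    proof
      fix t assume "t \<in> set w"
      then obtain k where k: "1 \<le> k" "k \<le> n" "t = c k" by auto
      have "M s (c k) = 2" by (rule nb2') (use k s in auto)
      then show "t \<in> S \<and> M s t = 2 \<and> M t t = 1" using k cS Mself by auto
    qed
  qed (use s Mself in auto)
  moreover have "phi_word sp sm s0 [s] = [s]" using s s0 by (auto simp: phi_word_def)
  ultimately show ?thesis using cox_eq.sym by metis
qed

lemma gen_0:
  assumes s0: "s0 \<notin> S"
  shows "cox_eq S M (phi_word (c 1) (c 0) s0 [s0]) (w @ [c 0] @ rev w)"
proof -
  define L where "L = map c [2..<Suc n]"
  have "[1..<Suc n] = 1 # [2..<Suc n]" using n1 upt_conv_Cons[of 1 "Suc n"] by (simp add: numeral_2_eq_2 del: upt_Suc)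
  then have w: "w = c 1 # L" unfolding L_def by simp
  have "cox_eq S M (L @ [c 0] @ rev L) [c 0]"
  proof (rule cox_conj_list)
    show "\<forall>t\<in>set L. t \<in> S \<and> M (c 0) t = 2 \<and> M t t = 1"
    proof
      fix t assume "t \<in> set L"
      then obtain k where k: "2 \<le> k" "k \<le> n" "t = c k" by (auto simp: L_def)
      have "M (c 0) (c k) = 2" by (rule nb2') (use k cS ceq in auto)
      then show "t \<in> S \<and> M (c 0) t = 2 \<and> M t t = 1" using k cS Mself by auto
    qed
  qed (use cS Mself in auto)
  then have "cox_eq S M ([c 1] @ (L @ [c 0] @ rev L) @ [c 1]) ([c 1] @ [c 0] @ [c 1])"
    by (rule cox_app)
  moreover have "phi_word (c 1) (c 0) s0 [s0] = [c 1, c 0, c 1]" by (simp add: phi_word_def)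
  ultimately show ?thesis using w cox_eq.sym by fastforce
qed

lemma gen_mid:
  assumes l: "1 \<le> l" "l < n" and s0: "s0 \<notin> S"
  shows "cox_eq S M (phi_word sp sm s0 [c (Suc l)]) (w @ [c l] @ rev w)"
proof -
  define P where "P = map c [1..<l]"
  define Q where "Q = map c [Suc (Suc l)..<Suc n]"
  have "[1..<Suc n] = [1..<l] @ [l..<Suc n]" using l upt_add_eq_append[of 1 l "Suc n - l"] by simp
  also have "[l..<Suc n] = l # Suc l # [Suc (Suc l)..<Suc n]" using l by (simp add: upt_conv_Cons)
  finally have w: "w = P @ [c l, c (Suc l)] @ Q" by (simp add: P_def Q_def)
  have q: "cox_eq S M (Q @ [c l] @ rev Q) [c l]"
  proof (rule cox_conj_list)
    show "\<forall>t\<in>set Q. t \<in> S \<and> M (c l) t = 2 \<and> M t t = 1"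
    proof
      fix t assume "t \<in> set Q"
      then obtain k where k: "Suc (Suc l) \<le> k" "k \<le> n" "t = c k" by (auto simp: Q_def)
      have "M (c l) (c k) = 2" by (rule nb2') (use k l cS ceq in auto)
      then show "t \<in> S \<and> M (c l) t = 2 \<and> M t t = 1" using k cS Mself by auto
    qed
  qed (use cS Mself l in auto)
  have p: "cox_eq S M (P @ [c (Suc l)] @ rev P) [c (Suc l)]"
  proof (rule cox_conj_list)
    show "\<forall>t\<in>set P. t \<in> S \<and> M (c (Suc l)) t = 2 \<and> M t t = 1"
    proof
      fix t assume "t \<in> set P"
      then obtain k where k: "1 \<le> k" "k < l" "t = c k" by (auto simp: P_def)
      have "M (c (Suc l)) (c k) = 2" by (rule nb2) (use k l cS ceq in auto)
      then show "t \<in> S \<and> M (c (Suc l)) t = 2 \<and> M t t = 1" using k l cS Mself by auto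
    qed
  qed (use cS Mself l in auto)
  have e1: "w @ [c l] @ rev w = (P @ [c l, c (Suc l)]) @ (Q @ [c l] @ rev Q) @ ([c (Suc l), c l] @ rev P)"
    using w by simp
  have s1: "cox_eq S M (w @ [c l] @ rev w) ((P @ [c l, c (Suc l)]) @ [c l] @ ([c (Suc l), c l] @ rev P))"
    unfolding e1 by (rule cox_app[OF q])
  have b: "cox_eq S M [c l, c (Suc l), c l, c (Suc l), c l] [c (Suc l)]"
    by (rule cox_braid) (use l cS M3 Mself in auto)
  have s2: "cox_eq S M (P @ [c l, c (Suc l), c l, c (Suc l), c l] @ rev P) (P @ [c (Suc l)] @ rev P)"
    by (rule cox_app[OF b])
  have "cox_eq S M (w @ [c l] @ rev w) [c (Suc l)]"
    using s1 s2 p by (auto intro: cox_eq.trans)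
  moreover have "phi_word sp sm s0 [c (Suc l)] = [c (Suc l)]"
    using s0 cS l by (auto simp: phi_word_def)
  ultimately show ?thesis using cox_eq.sym by metis
qed

end

context chn begin

definition "Pr m u v \<longleftrightarrow> u \<in> vecs S \<and> (\<forall>k. m \<le> k \<and> k \<le> n \<longrightarrow> u (c k) = v (c (k-1)))
   \<and> (\<forall>t. t \<notin> c ` {m..n} \<longrightarrow> u t = v t)"

lemma sw_char:
  assumes v: "v \<in> vecs (S - {c n})" and m: "1 \<le> m" "m \<le> Suc n"
  shows "Pr m (sigma_word M (map c [m..<Suc n]) v) v"
  using m(2)
proof (induction rule: inc_induct)
  case base
  show ?case using v by (auto simp: Pr_def vecs_def)
next
  case (step i)
  define u where "u = sigma_word M (map c [Suc i..<Suc n]) v"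
  have IH: "Pr (Suc i) u v" using step u_def by simp
  have i: "1 \<le> i" "i \<le> n" using step m by auto
  have eq: "sigma_word M (map c [i..<Suc n]) v = sigma_gen M (c i) u"
    using step upt_conv_Cons[of i "Suc n"] by (simp add: u_def del: upt_Suc)
  have uS: "u \<in> vecs S" using IH by (simp add: Pr_def)
  have vcn: "v (c n) = 0" using v by (simp add: vecs_def)
  have ni: "c i \<notin> c ` {Suc i..n}" "c (i-1) \<notin> c ` {Suc i..n}"
    using i ceq by (force, force)
  have ui: "u (c i) = v (c i)" using IH ni by (auto simp: Pr_def)
  have ui1: "u (c (i-1)) = v (c (i-1))" using IH ni by (auto simp: Pr_def)
  have uiS: "i < n \<Longrightarrow> u (c (Suc i)) = v (c i)" using IH i by (auto simp: Pr_def)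
  define F where "F = {c (i-1), c i} \<union> (if i < n then {c (Suc i)} else {})"
  have fin: "finite {t. u t \<noteq> 0}" using uS by (simp add: vecs_def)
  have zero: "\<forall>t. t \<notin> F \<longrightarrow> u t * kcoef M (c i) t = 0"
  proof (intro allI impI)
    fix t assume t: "t \<notin> F"
    show "u t * kcoef M (c i) t = 0"
    proof (cases "t \<in> S")
      case False then show ?thesis using uS by (simp add: vecs_def)
    next
      case True
      have "M (c i) t = 2" by (rule nb2) (use i t True in \<open>auto simp: F_def\<close>)
      then show ?thesis by (simp add: kcoef2)
    qed
  qed
  have k1: "kcoef M (c i) (c (i-1)) = 1" using M3'[of "i-1"] i by (simp add: kcoef3)
  have k2: "kcoef M (c i) (c i) = -2" using Mself cS i by (simp add: kcoef1)
  have k3: "i < n \<Longrightarrow> kcoef M (c i) (c (Suc i)) = 1" using M3[of i] by (simp add: kcoef3)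
  have d1: "c (i-1) \<noteq> c i" "c i \<noteq> c (i-1)" using i ceq by auto
  have d2: "i < n \<Longrightarrow> c i \<noteq> c (Suc i) \<and> c (i-1) \<noteq> c (Suc i) \<and> c (Suc i) \<noteq> c i \<and> c (Suc i) \<noteq> c (i-1)" using i ceq by auto
  have B: "(\<Sum>t'\<in>F. u t' * kcoef M (c i) t') = v (c (i-1)) - v (c i)"
  proof (cases "i < n")
    case True
    then show ?thesis using d1 d2[OF True] k1 k2 k3 ui ui1 uiS by (simp add: F_def)
  next
    case False
    then have "i = n" using i by simp
    then show ?thesis using d1 k1 k2 ui ui1 vcn False by (simp add: F_def)
  qed
  have r: "sigma_gen M (c i) u = (\<lambda>t. u t + (if t = c i then v (c (i-1)) - v (c i) else 0))"
  proof -
    have "finite F" by (simp add: F_def)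
    from sig_sum[OF fin this zero] show ?thesis unfolding B .
  qed
  have "Pr i (sigma_gen M (c i) u) v"
    unfolding Pr_def
  proof (intro conjI allI impI)
    have "{t. u t + (if t = c i then v (c (i - 1)) - v (c i) else 0) \<noteq> 0} \<subseteq> {t. u t \<noteq> 0} \<union> {c i}"
      by auto
    then have "finite {t. u t + (if t = c i then v (c (i - 1)) - v (c i) else 0) \<noteq> 0}"
      using fin finite_subset by blast
    then show "sigma_gen M (c i) u \<in> vecs S" using r uS cS i by (auto simp: vecs_def)
  next
    fix k assume k: "i \<le> k \<and> k \<le> n"
    show "sigma_gen M (c i) u (c k) = v (c (k - 1))"
    proof (cases "k = i")
      case True then show ?thesis using r ui by simp
    next
      case False
      then have "c k \<noteq> c i" using k i ceq by auto
      then show ?thesis using r IH k False by (auto simp: Pr_def)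
    qed
  next
    fix t assume t: "t \<notin> c ` {i..n}"
    then have "t \<noteq> c i" "t \<notin> c ` {Suc i..n}" using i by auto
    then show "sigma_gen M (c i) u t = v t" using r IH by (auto simp: Pr_def)
  qed
  then show ?case using eq by simp
qed

end

context chn begin

lemma sc: assumes "v \<in> vecs (S - {c n})"
  shows "sigma_word M w v \<in> vecs S"
    "\<And>k. 1 \<le> k \<Longrightarrow> k \<le> n \<Longrightarrow> sigma_word M w v (c k) = v (c (k-1))"
    "\<And>t. t \<notin> c ` {1..n} \<Longrightarrow> sigma_word M w v t = v t"
  using sw_char[OF assms, of 1] by (auto simp: Pr_def)

lemma vecs_comb: "u \<in> vecs A \<Longrightarrow> v \<in> vecs A \<Longrightarrow> (\<lambda>t. a * u t + v t) \<in> vecs A"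
proof -
  assume u: "u \<in> vecs A" and v: "v \<in> vecs A"
  have sub: "{t. a * u t + v t \<noteq> 0} \<subseteq> {t. u t \<noteq> 0} \<union> {t. v t \<noteq> 0}" by auto
  have "finite {t. a * u t + v t \<noteq> 0}"
    by (rule finite_subset[OF sub]) (use u v in \<open>simp add: vecs_def\<close>)
  moreover have "\<forall>t. t \<notin> A \<longrightarrow> a * u t + v t = 0" using u v by (simp add: vecs_def)
  ultimately show ?thesis by (simp add: vecs_def)
qed

lemma lin: assumes "u \<in> vecs (S - {c n})" "v \<in> vecs (S - {c n})"
  shows "sigma_word M w (\<lambda>t. a * u t + v t) = (\<lambda>t. a * sigma_word M w u t + sigma_word M w v t)"
proof
  fix t
  have uv: "(\<lambda>t. a * u t + v t) \<in> vecs (S - {c n})" by (rule vecs_comb[OF assms])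
  show "sigma_word M w (\<lambda>t. a * u t + v t) t = a * sigma_word M w u t + sigma_word M w v t"
  proof (cases "t \<in> c ` {1..n}")
    case True
    then obtain k where "1 \<le> k" "k \<le> n" "t = c k" by auto
    then show ?thesis using sc[OF uv] sc[OF assms(1)] sc[OF assms(2)] by simp
  next
    case False
    then show ?thesis using sc[OF uv] sc[OF assms(1)] sc[OF assms(2)] by simp
  qed
qed

lemma injs: "inj_on (sigma_word M w) (vecs (S - {c n}))"
proof (rule inj_onI)
  fix u v assume u: "u \<in> vecs (S - {c n})" and v: "v \<in> vecs (S - {c n})"
    and e: "sigma_word M w u = sigma_word M w v"
  show "u = v"
  proof
    fix t
    show "u t = v t"
    proof (cases "t \<in> c ` {0..<n}")
      case True
      then obtain l where l: "l < n" "t = c l" by auto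
      have "u (c (Suc l - 1)) = v (c (Suc l - 1))"
        using sc(2)[OF u, of "Suc l"] sc(2)[OF v, of "Suc l"] e l by simp
      then show ?thesis using l by simp
    next
      case False
      show ?thesis
      proof (cases "t = c n")
        case True then show ?thesis using u v by (simp add: vecs_def)
      next
        case False
        then have "t \<notin> c ` {1..n}" using \<open>t \<notin> c ` {0..<n}\<close> by (auto simp: le_less)
        then show ?thesis using sc(3)[OF u] sc(3)[OF v] e by metis
      qed
    qed
  qed
qed

lemma alpha_vecs: "s \<in> A \<Longrightarrow> alpha s \<in> vecs A"
  by (auto simp: vecs_def alpha_def)

lemma sig1: assumes v: "v \<in> vecs (S - {c n})"
  shows "lin_ext (\<lambda>s. if s \<in> c ` {0..<n} then sigma_word M w (alpha s) else alpha s) v = sigma_word M w v"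
proof -
  let ?f = "\<lambda>s. if s \<in> c ` {0..<n} then sigma_word M w (alpha s) else alpha s"
  have fin: "finite {s. v s \<noteq> 0}" using v by (simp add: vecs_def)
  have fs: "?f s = sigma_word M w (alpha s)" if "v s \<noteq> 0" for s
  proof -
    have sS: "s \<in> S - {c n}" using v that by (auto simp: vecs_def)
    have av: "alpha s \<in> vecs (S - {c n})" by (rule alpha_vecs[OF sS])
    show ?thesis
    proof (cases "s \<in> c ` {0..<n}")
      case True then show ?thesis by simp
    next
      case False
      then have nc: "s \<notin> c ` {0..n}" using sS by (auto simp: le_less)
      have "sigma_word M w (alpha s) = alpha s"
      proof
        fix t show "sigma_word M w (alpha s) t = alpha s t"
        proof (cases "t \<in> c ` {1..n}")
          case True
          then obtain k where k: "1 \<le> k" "k \<le> n" "t = c k" by auto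
          then have "s \<noteq> c (k-1)" "s \<noteq> c k" using nc by auto
          then show ?thesis using sc(2)[OF av k(1,2)] k by (simp add: alpha_def)
        next
          case False then show ?thesis using sc(3)[OF av] by simp
        qed
      qed
      then show ?thesis using False by simp
    qed
  qed
  show ?thesis
  proof
    fix t
    have "lin_ext ?f v t = (\<Sum>s\<in>{s. v s \<noteq> 0}. v s * sigma_word M w (alpha s) t)"
      unfolding lin_ext_def by (rule sum.cong) (use fs in auto)
    also have "\<dots> = sigma_word M w v t"
    proof (cases "t \<in> c ` {1..n}")
      case True
      then obtain k where k: "1 \<le> k" "k \<le> n" "t = c k" by auto
      have "(\<Sum>s\<in>{s. v s \<noteq> 0}. v s * sigma_word M w (alpha s) t) = (\<Sum>s\<in>{s. v s \<noteq> 0}. v s * alpha s (c (k-1)))"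
      proof (rule sum.cong)
        fix s assume "s \<in> {s. v s \<noteq> 0}"
        then have sS: "s \<in> S - {c n}" using v by (auto simp: vecs_def)
        then show "v s * sigma_word M w (alpha s) t = v s * alpha s (c (k-1))"
          using sc(2)[OF alpha_vecs[OF sS] k(1,2)] k by simp
      qed simp
      also have "\<dots> = v (c (k-1))" using alpha_sum[OF fin] by simp
      finally show ?thesis using sc(2)[OF v k(1,2)] k by simp
    next
      case False
      have "(\<Sum>s\<in>{s. v s \<noteq> 0}. v s * sigma_word M w (alpha s) t) = (\<Sum>s\<in>{s. v s \<noteq> 0}. v s * alpha s t)"
      proof (rule sum.cong)
        fix s assume "s \<in> {s. v s \<noteq> 0}"
        then have sS: "s \<in> S - {c n}" using v by (auto simp: vecs_def)
        then show "v s * sigma_word M w (alpha s) t = v s * alpha s t"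
          using sc(3)[OF alpha_vecs[OF sS] False] by simp
      qed simp
      also have "\<dots> = v t" using alpha_sum[OF fin] by simp
      finally show ?thesis using sc(3)[OF v False] by simp
    qed
    finally show "lin_ext ?f v t = sigma_word M w v t" .
  qed
qed

end

context chn begin

lemma c01: "c 0 \<noteq> c 1" "c 1 \<noteq> c 0" using ceq n1 by auto

lemma img: "sigma_word M w ` vecs (S - {c n}) = contr_vecs S (c 1) (c 0)"
proof
  show "sigma_word M w ` vecs (S - {c n}) \<subseteq> contr_vecs S (c 1) (c 0)"
  proof
    fix y assume "y \<in> sigma_word M w ` vecs (S - {c n})"
    then obtain v where v: "v \<in> vecs (S - {c n})" and y: "y = sigma_word M w v" by auto
    define b where "b = v (c 0)"
    define a where "a = (\<lambda>t. y t - b * (alpha (c 1) t + alpha (c 0) t))"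
    have yS: "y \<in> vecs S" using sc(1)[OF v] y by simp
    have y1: "y (c 1) = b" using sc(2)[OF v, of 1] n1 y b_def by simp
    have c0n: "c 0 \<notin> c ` {1..n}"
    proof
      assume "c 0 \<in> c ` {1..n}"
      then obtain k where "k \<in> {1..n}" "c 0 = c k" by blast
      then show False using ceq[of 0 k] by simp
    qed
    have y0: "y (c 0) = b" using sc(3)[OF v c0n] y b_def by simp
    have "{t. a t \<noteq> 0} \<subseteq> {t. y t \<noteq> 0} \<union> {c 0, c 1}" by (auto simp: a_def alpha_def)
    then have fa: "finite {t. a t \<noteq> 0}" by (rule finite_subset) (use yS in \<open>simp add: vecs_def\<close>)
    have "\<forall>t. t \<notin> S - {c 1, c 0} \<longrightarrow> a t = 0"
    proof (intro allI impI)
      fix t assume t: "t \<notin> S - {c 1, c 0}"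
      show "a t = 0"
      proof (cases "t = c 1")
        case True then show ?thesis using y1 c01 by (simp add: a_def alpha_def)
      next
        case False
        show ?thesis
        proof (cases "t = c 0")
          case True then show ?thesis using y0 c01 by (simp add: a_def alpha_def)
        next
          case False
          then have "t \<notin> S" using t \<open>t \<noteq> c 1\<close> by auto
          moreover have "y t = 0" using yS \<open>t \<notin> S\<close> by (simp add: vecs_def)
          ultimately show ?thesis using \<open>t \<noteq> c 1\<close> \<open>t \<noteq> c 0\<close> by (simp add: a_def alpha_def)
        qed
      qed
    qed
    then have "a \<in> vecs (S - {c 1, c 0})" using fa by (simp add: vecs_def)
    moreover have "y = (\<lambda>t. a t + b * (alpha (c 1) t + alpha (c 0) t))" by (simp add: a_def)
    ultimately show "y \<in> contr_vecs S (c 1) (c 0)" unfolding contr_vecs_def by blast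
  qed
next
  show "contr_vecs S (c 1) (c 0) \<subseteq> sigma_word M w ` vecs (S - {c n})"
  proof
    fix x assume "x \<in> contr_vecs S (c 1) (c 0)"
    then obtain a b where a: "a \<in> vecs (S - {c 1, c 0})"
      and x: "x = (\<lambda>t. a t + b * (alpha (c 1) t + alpha (c 0) t))"
      unfolding contr_vecs_def by blast
    define \<iota> where "\<iota> = the_inv_into {0..n} c"
    have \<iota>: "\<And>k. k \<le> n \<Longrightarrow> \<iota> (c k) = k" unfolding \<iota>_def
      using the_inv_into_f_f[OF c_inj] by simp
    define v where "v = (\<lambda>t. if t \<in> c ` {0..<n} then x (c (Suc (\<iota> t))) else if t = c n then 0 else x t)"
    have a0: "\<And>t. t \<notin> S - {c 1, c 0} \<Longrightarrow> a t = 0" using a by (simp add: vecs_def)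
    have xc1: "x (c 1) = b" using a0[of "c 1"] c01 by (simp add: x alpha_def)
    have xc0: "x (c 0) = b" using a0[of "c 0"] c01 by (simp add: x alpha_def)
    have xout: "x t = 0" if t: "t \<notin> S" for t
    proof -
      have "t \<noteq> c 1" "t \<noteq> c 0" using t cS[of 0] cS[of 1] n1 by auto
      moreover have "a t = 0" using a0 t by blast
      ultimately show ?thesis by (simp add: x alpha_def)
    qed
    have "{t. v t \<noteq> 0} \<subseteq> c ` {0..n} \<union> ({t. a t \<noteq> 0} \<union> {c 0, c 1})"
    proof
      fix t assume "t \<in> {t. v t \<noteq> 0}"
      then have vt: "v t \<noteq> 0" by simp
      show "t \<in> c ` {0..n} \<union> ({t. a t \<noteq> 0} \<union> {c 0, c 1})"
      proof (cases "t \<in> c ` {0..<n}")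
        case True then show ?thesis by auto
      next
        case False
        then have "x t \<noteq> 0" using vt unfolding v_def by (auto split: if_splits)
        then have "a t \<noteq> 0 \<or> t = c 0 \<or> t = c 1" by (auto simp: x alpha_def split: if_splits)
        then show ?thesis by blast
      qed
    qed
    moreover have "finite {t. a t \<noteq> 0}" using a by (simp add: vecs_def)
    ultimately have fv: "finite {t. v t \<noteq> 0}" using finite_subset by fastforce
    have cnn: "c n \<notin> c ` {0..<n}"
    proof
      assume "c n \<in> c ` {0..<n}"
      then obtain k where "k \<in> {0..<n}" "c n = c k" by blast
      then show False using ceq[of n k] by simp
    qed
    have vS: "v \<in> vecs (S - {c n})"
    proof -
      have "\<forall>t. t \<notin> S - {c n} \<longrightarrow> v t = 0"
      proof (intro allI impI)
        fix t assume t: "t \<notin> S - {c n}"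
        show "v t = 0"
        proof (cases "t = c n")
          case True then show ?thesis using cnn by (simp add: v_def)
        next
          case False
          then have "t \<notin> S" using t by auto
          moreover then have "t \<notin> c ` {0..<n}" using cS by auto
          ultimately show ?thesis using xout False by (simp add: v_def)
        qed
      qed
      then show ?thesis using fv by (simp add: vecs_def)
    qed
    have "sigma_word M w v = x"
    proof
      fix t
      show "sigma_word M w v t = x t"
      proof (cases "t \<in> c ` {1..n}")
        case True
        then obtain k where k: "1 \<le> k" "k \<le> n" "t = c k" by auto
        have "c (k-1) \<in> c ` {0..<n}" using k by auto
        then have "v (c (k-1)) = x (c k)" using \<iota>[of "k-1"] k by (simp add: v_def)
        then show ?thesis using sc(2)[OF vS k(1,2)] k by simp
      next
        case False
        have e: "sigma_word M w v t = v t" by (rule sc(3)[OF vS False])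
        show ?thesis
        proof (cases "t \<in> c ` {0..<n}")
          case True
          then obtain l where l: "l < n" "t = c l" by auto
          then have "l = 0" using False by (cases l) auto
          then show ?thesis using e l \<iota>[of 0] xc0 xc1 by (simp add: v_def)
        next
          case False2: False
          have "t \<noteq> c n" using False n1 by auto
          then show ?thesis using e False2 by (simp add: v_def)
        qed
      qed
    qed
    then show "x \<in> sigma_word M w ` vecs (S - {c n})" using vS by blast
  qed
qed

end

context chn begin

lemma winv: "cox_eq S M (w @ rev w) []" "cox_eq S M (rev w @ w) []"
proof -
  have h: "\<forall>t\<in>set w. t \<in> S \<and> M t t = 1" using cS Mself by auto
  show "cox_eq S M (w @ rev w) []" by (rule cox_inv_list) (use h in auto)
  show "cox_eq S M (rev w @ w) []" using cox_inv_list[of "rev w" S M] h by simp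
qed

lemma gen:
  assumes s: "s \<in> S - {c n}" and s0: "s0 \<notin> S"
    and tau_out: "\<forall>s\<in>S - {c n}. s \<notin> c ` {0..n} \<longrightarrow> tau s = s"
    and tau_chain: "\<forall>l. 1 \<le> l \<and> l < n \<longrightarrow> tau (c l) = c (Suc l)"
    and tau0: "tau (c 0) = s0"
  shows "cox_eq S M (phi_word (c 1) (c 0) s0 [tau s]) (w @ [s] @ rev w)"
proof (cases "s \<in> c ` {0..n}")
  case True
  then obtain l where l: "l \<le> n" "s = c l" by auto
  then have "l \<noteq> n" using s by auto
  show ?thesis
  proof (cases "l = 0")
    case True then show ?thesis using gen_0[OF s0] l tau0 by simp
  next
    case False
    then have "1 \<le> l" "l < n" using l \<open>l \<noteq> n\<close> by auto
    then show ?thesis using gen_mid[OF _ _ s0, of l "c 1" "c 0"] l tau_chain by simp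
  qed
next
  case False
  then show ?thesis using gen_out[of s s0 "c 1" "c 0"] s s0 tau_out by simp
qed

lemma words:
  assumes s0: "s0 \<notin> S"
    and tau_out: "\<forall>s\<in>S - {c n}. s \<notin> c ` {0..n} \<longrightarrow> tau s = s"
    and tau_chain: "\<forall>l. 1 \<le> l \<and> l < n \<longrightarrow> tau (c l) = c (Suc l)"
    and tau0: "tau (c 0) = s0"
  shows "set x \<subseteq> S - {c n} \<Longrightarrow> cox_eq S M (phi_word (c 1) (c 0) s0 (map tau x)) (w @ x @ rev w)"
proof (induction x)
  case Nil
  show ?case using winv(1) cox_eq.sym by (simp add: phi_word_def del: upt_Suc)
next
  case (Cons s x)
  have a: "cox_eq S M (phi_word (c 1) (c 0) s0 [tau s] @ phi_word (c 1) (c 0) s0 (map tau x))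
      ((w @ [s] @ rev w) @ (w @ x @ rev w))"
    by (rule cox_append[OF gen[OF _ s0 tau_out tau_chain tau0] Cons.IH]) (use Cons.prems in auto)
  have b: "cox_eq S M ((w @ [s]) @ (rev w @ w) @ (x @ rev w)) ((w @ [s]) @ [] @ (x @ rev w))"
    by (rule cox_app[OF winv(2)])
  have "phi_word (c 1) (c 0) s0 (map tau (s # x)) = phi_word (c 1) (c 0) s0 [tau s] @ phi_word (c 1) (c 0) s0 (map tau x)"
    using phi_word_append[of "c 1" "c 0" s0 "[tau s]" "map tau x"] by simp
  then show ?case using a b cox_eq.trans by fastforce
qed

end

theorem mainTheorem3:
  fixes S :: "'a set" and M :: "'a \<Rightarrow> 'a \<Rightarrow> enat"
    and sp sm s0 :: 'a and c :: "nat \<Rightarrow> 'a" and n :: nat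
    and tau :: "'a \<Rightarrow> 'a"
  assumes cox: "is_coxeter_matrix S M"
    and sp: "sp \<in> S" and sm: "sm \<in> S" and e3: "M sp sm = 3"
    and s0: "s0 \<notin> S"
    \<comment> \<open>condition (B)\<close>
    and n1: "1 \<le> n"
    and c_S: "\<forall>k\<le>n. c k \<in> S"
    and c_inj: "inj_on c {0..n}"
    and c0: "c 0 = sm" and c1: "c 1 = sp"
    and c3: "\<forall>k<n. M (c k) (c (Suc k)) = 3"
    and c2: "\<forall>k\<in>{1..n}. \<forall>s\<in>S. s \<noteq> c k \<and> s \<noteq> c (k - 1) \<and> (k < n \<longrightarrow> s \<noteq> c (Suc k))
               \<longrightarrow> M (c k) s = 2"
    \<comment> \<open>tau on the generators of W_{S'}, S' = S - {c n}\<close>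
    and tau_out: "\<forall>s\<in>S - {c n}. s \<notin> c ` {0..n} \<longrightarrow> tau s = s"
    and tau_chain: "\<forall>l. 1 \<le> l \<and> l < n \<longrightarrow> tau (c l) = c (Suc l)"
    and tau0: "tau (c 0) = s0"
  shows
    "(let S' = S - {c n};
          w = map c [1..<Suc n];
          sigma1 = lin_ext (\<lambda>s. if s \<in> c ` {0..<n} then sigma_word M w (alpha s) else alpha s)
      in (\<forall>u\<in>vecs S'. \<forall>v\<in>vecs S'. \<forall>a::real.
              sigma1 (\<lambda>t. a * u t + v t) = (\<lambda>t. a * sigma1 u t + sigma1 v t))
         \<and> inj_on sigma1 (vecs S')
         \<and> sigma1 ` vecs S' = contr_vecs S sp sm
         \<and> (\<forall>\<alpha>\<in>vecs S'. \<forall>x. set x \<subseteq> S' \<longrightarrow>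
              sd_eq S M (phi_aff sp sm s0 (sigma1 \<alpha>, map tau x))
                        (sigma_word M w \<alpha>, w @ x @ word_inv w)))"
proof -
  interpret chn S M c n using cox n1 c_S c_inj c3 c2 by unfold_locales
  let ?f = "lin_ext (\<lambda>s. if s \<in> c ` {0..<n} then sigma_word M w (alpha s) else alpha s)"
  have eq: "\<And>v. v \<in> vecs (S - {c n}) \<Longrightarrow> ?f v = sigma_word M w v" by (rule sig1)
  have L: "\<forall>u\<in>vecs (S - {c n}). \<forall>v\<in>vecs (S - {c n}). \<forall>a::real.
              ?f (\<lambda>t. a * u t + v t) = (\<lambda>t. a * ?f u t + ?f v t)"
  proof (intro ballI allI)
    fix u v and a :: real assume u: "u \<in> vecs (S - {c n})" and v: "v \<in> vecs (S - {c n})"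
    have uv: "(\<lambda>t. a * u t + v t) \<in> vecs (S - {c n})" by (rule vecs_comb[OF u v])
    show "?f (\<lambda>t. a * u t + v t) = (\<lambda>t. a * ?f u t + ?f v t)"
      unfolding eq[OF uv] eq[OF u] eq[OF v] by (rule lin[OF u v])
  qed
  have "inj_on ?f (vecs (S - {c n})) = inj_on (sigma_word M w) (vecs (S - {c n}))"
    by (rule inj_on_cong) (rule eq)
  then have I: "inj_on ?f (vecs (S - {c n}))" using injs by simp
  have "?f ` vecs (S - {c n}) = sigma_word M w ` vecs (S - {c n})"
    by (rule image_cong[OF HOL.refl eq])
  then have Im: "?f ` vecs (S - {c n}) = contr_vecs S sp sm"
    using img unfolding c0 c1 by simp
  have P: "\<forall>\<alpha>\<in>vecs (S - {c n}). \<forall>x. set x \<subseteq> S - {c n} \<longrightarrow>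
              sd_eq S M (phi_aff sp sm s0 (?f \<alpha>, map tau x))
                        (sigma_word M w \<alpha>, w @ x @ word_inv w)"
  proof (intro ballI allI impI)
    fix \<alpha> x assume a: "\<alpha> \<in> vecs (S - {c n})" and x: "set x \<subseteq> S - {c n}"
    have "cox_eq S M (phi_word (c 1) (c 0) s0 (map tau x)) (w @ x @ rev w)"
      by (rule words[OF s0 tau_out tau_chain tau0 x])
    then have "cox_eq S M (phi_word sp sm s0 (map tau x)) (w @ x @ word_inv w)"
      unfolding c0 c1 word_inv_def .
    then show "sd_eq S M (phi_aff sp sm s0 (?f \<alpha>, map tau x)) (sigma_word M w \<alpha>, w @ x @ word_inv w)"
      unfolding sd_eq_def phi_aff_def fst_conv snd_conv eq[OF a] by simp
  qed
  show ?thesis unfolding Let_def using L I Im P by blast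
qed


end
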